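(* Let $r$ be a Hermitian symmetric polynomial in one complex variable with $r(z,\overline z)>0$ for all $z\in\mathbb{C}$ but $\inf_{z\in\mathbb{C}}r(z,\overline z)=0$. Then $r\notin\mathcal{Q}'(1)$.
   Context: $\mathcal{Q}'(1)$: Hermitian symmetric polynomials $r$ in one variable with $r(z,\overline z)\ge0$ for all $z$ for which there exist a Hermitian symmetric polynomial $s\ge0$, not identically $0$, and a holomorphic polynomial mapping $F$ with $rs=\|F\|^2$. *)

theory Defs
  imports Complex_Main "HOL-Computational_Algebra.Polynomial"
begin

text \<open>A polynomial in (z, conj w) in one complex variable is given by its coefficient
  function c, with r(z, conj w) = sum c j k z^j (conj w)^k over the finite support.\<close>

definition hs_support :: "(nat \<Rightarrow> nat \<Rightarrow> complex) \<Rightarrow> (nat \<times> nat) set" where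
  "hs_support c = {(j, k). c j k \<noteq> 0}"

definition hermitian_sym_poly :: "(nat \<Rightarrow> nat \<Rightarrow> complex) \<Rightarrow> bool" where
  "hermitian_sym_poly c \<longleftrightarrow> finite (hs_support c) \<and> (\<forall>j k. c k j = cnj (c j k))"

definition hs_eval :: "(nat \<Rightarrow> nat \<Rightarrow> complex) \<Rightarrow> complex \<Rightarrow> complex \<Rightarrow> complex" where
  "hs_eval c z w = (\<Sum>(j, k)\<in>hs_support c. c j k * z ^ j * cnj w ^ k)"

text \<open>Value on the diagonal r(z, conj z) (real for Hermitian symmetric c).\<close>
definition hs_diag :: "(nat \<Rightarrow> nat \<Rightarrow> complex) \<Rightarrow> complex \<Rightarrow> real" where
  "hs_diag c z = Re (hs_eval c z z)"

text \<open>The class Q'(1). The identity r s = ||F||^2 is the polynomial identity in (z, conj w),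
  i.e. r(z,conj w) s(z,conj w) = sum_i f_i(z) conj(f_i(w)) for all z, w.\<close>
definition Qprime1 :: "(nat \<Rightarrow> nat \<Rightarrow> complex) \<Rightarrow> bool" where
  "Qprime1 r \<longleftrightarrow> hermitian_sym_poly r \<and> (\<forall>z. hs_diag r z \<ge> 0) \<and>
     (\<exists>s (F :: complex poly list).
        hermitian_sym_poly s \<and> (\<forall>z. hs_diag s z \<ge> 0) \<and> (\<exists>j k. s j k \<noteq> 0) \<and>
        (\<forall>z w. hs_eval r z w * hs_eval s z w = (\<Sum>f\<leftarrow>F. poly f z * cnj (poly f w))))"

end

theory Submission
  imports Defs "HOL-Analysis.Analysis"
begin

lemma herm_rule:
  assumes h: "hermitian_sym_poly c"
  shows "c k j = cnj (c j k)"
  using h unfolding hermitian_sym_poly_def by blast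

lemma eval_cnj:
  assumes h: "hermitian_sym_poly c"
  shows "hs_eval c z w = cnj (hs_eval c w z)"
proof -
  have mem: "(k,j) \<in> hs_support c \<longleftrightarrow> (j,k) \<in> hs_support c" for j k
  proof -
    have "c k j = cnj (c j k)" by (rule herm_rule[OF h])
    thus ?thesis unfolding hs_support_def by simp
  qed
  have symS: "prod.swap ` hs_support c = hs_support c"
  proof (intro set_eqI iffI)
    fix p assume "p \<in> prod.swap ` hs_support c"
    then obtain j k where "(j,k) \<in> hs_support c" "p = (k,j)" by auto
    thus "p \<in> hs_support c" using mem[of k j] by simp
  next
    fix p assume p: "p \<in> hs_support c"
    obtain j k where pjk: "p = (j,k)" by fastforce
    have "(k,j) \<in> hs_support c" using p pjk mem[of k j] by simp
    moreover have "p = prod.swap (k,j)" using pjk by simp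
    ultimately show "p \<in> prod.swap ` hs_support c" by blast
  qed
  have H: "cnj (c j k) = c k j" for j k using herm_rule[OF h, of k j] by simp
  have "cnj (hs_eval c w z) = (\<Sum>(j,k)\<in>hs_support c. c k j * z ^ k * cnj w ^ j)"
    unfolding hs_eval_def cnj_sum by (intro sum.cong) (auto simp: H)
  also have "\<dots> = (\<Sum>p\<in>hs_support c. (\<lambda>(j,k). c j k * z ^ j * cnj w ^ k) (prod.swap p))"
    by (intro sum.cong) auto
  also have "\<dots> = (\<Sum>p\<in>prod.swap ` hs_support c. (\<lambda>(j,k). c j k * z ^ j * cnj w ^ k) p)"
    by (subst sum.reindex) (auto simp: comp_def)
  also have "\<dots> = hs_eval c z w" unfolding hs_eval_def symS ..
  finally show ?thesis by simp
qed

lemma eval_diag: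
  assumes h: "hermitian_sym_poly c"
  shows "hs_eval c z z = complex_of_real (hs_diag c z)"
proof -
  have "hs_eval c z z = cnj (hs_eval c z z)" using eval_cnj[OF h] .
  hence "Im (hs_eval c z z) = 0" by (metis complex_cnj_cancel_iff complex_cnj_zero_iff complex_eq_iff
     add.inverse_neutral cnj.sel(2) neg_equal_zero)
  thus ?thesis unfolding hs_diag_def by (simp add: complex_eq_iff)
qed

lemma CS_list:
  fixes F :: "complex poly list"
  shows "norm (\<Sum>f\<leftarrow>F. poly f z * cnj (poly f w))^2 \<le>
     (\<Sum>f\<leftarrow>F. norm (poly f z)^2) * (\<Sum>f\<leftarrow>F. norm (poly f w)^2)"
proof -
  let ?I = "{..<length F}"
  have e1: "(\<Sum>f\<leftarrow>F. poly f z * cnj (poly f w)) = (\<Sum>i\<in>?I. poly (F!i) z * cnj (poly (F!i) w))"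
    by (simp add: sum_list_sum_nth atLeast0LessThan)
  have e2: "\<And>x. (\<Sum>f\<leftarrow>F. norm (poly f x)^2) = (\<Sum>i\<in>?I. norm (poly (F!i) x)^2)"
    by (simp add: sum_list_sum_nth atLeast0LessThan)
  have "norm (\<Sum>i\<in>?I. poly (F!i) z * cnj (poly (F!i) w)) \<le> (\<Sum>i\<in>?I. norm (poly (F!i) z) * norm (poly (F!i) w))"
    by (rule order_trans[OF norm_sum]) (simp add: norm_mult)
  hence "norm (\<Sum>i\<in>?I. poly (F!i) z * cnj (poly (F!i) w))^2 \<le> (\<Sum>i\<in>?I. norm (poly (F!i) z) * norm (poly (F!i) w))^2"
    by (intro power_mono) auto
  also have "\<dots> \<le> (\<Sum>i\<in>?I. norm (poly (F!i) z)^2) * (\<Sum>i\<in>?I. norm (poly (F!i) w)^2)"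
    by (rule Cauchy_Schwarz_ineq_sum)
  finally show ?thesis unfolding e1 e2 .
qed

lemma diag_bound:
  assumes h: "hermitian_sym_poly c" and b: "\<And>j k. c j k \<noteq> 0 \<Longrightarrow> j \<le> b" and z: "norm z \<ge> 1"
  shows "hs_diag c z \<le> (\<Sum>(j,k)\<in>hs_support c. norm (c j k)) * norm z ^ (2*b)"
proof -
  have "hs_diag c z \<le> norm (hs_eval c z z)" unfolding hs_diag_def by (rule complex_Re_le_cmod)
  also have "\<dots> \<le> (\<Sum>(j,k)\<in>hs_support c. norm (c j k * z ^ j * cnj z ^ k))"
    unfolding hs_eval_def by (rule order_trans[OF norm_sum]) (simp add: case_prod_beta)
  also have "\<dots> \<le> (\<Sum>(j,k)\<in>hs_support c. norm (c j k) * norm z ^ (2*b))"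
  proof (rule sum_mono)
    fix p assume p: "p \<in> hs_support c"
    obtain j k where pjk: "p = (j,k)" by fastforce
    have "c j k \<noteq> 0" using p pjk by (simp add: hs_support_def)
    moreover have "c k j \<noteq> 0" using herm_rule[OF h, of k j] \<open>c j k \<noteq> 0\<close> by simp
    ultimately have "j \<le> b" "k \<le> b" using b by auto
    hence "norm z ^ (j + k) \<le> norm z ^ (2*b)" using z by (intro power_increasing) auto
    thus "(case p of (j,k) \<Rightarrow> norm (c j k * z ^ j * cnj z ^ k)) \<le> (case p of (j,k) \<Rightarrow> norm (c j k) * norm z ^ (2*b))"
      unfolding pjk by (simp add: norm_mult norm_power power_add mult.assoc mult_left_mono)
  qed
  also have "\<dots> = (\<Sum>(j,k)\<in>hs_support c. norm (c j k)) * norm z ^ (2*b)"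
    by (simp add: sum_distrib_right case_prod_beta)
  finally show ?thesis .
qed

definition rowpoly :: "(nat \<Rightarrow> nat \<Rightarrow> complex) \<Rightarrow> complex \<Rightarrow> complex poly" where
  "rowpoly c w = (\<Sum>(j,k)\<in>hs_support c. monom (c j k * cnj w ^ k) j)"

lemma poly_rowpoly: "poly (rowpoly c w) z = hs_eval c z w"
  unfolding rowpoly_def hs_eval_def by (simp add: poly_sum case_prod_beta poly_monom mult_ac)

lemma cont_diag: "continuous_on A (hs_diag c)"
  unfolding hs_diag_def hs_eval_def by (auto intro!: continuous_intros simp: case_prod_beta)

lemma prod_ineq:
  assumes h: "hermitian_sym_poly r" "hermitian_sym_poly s"
    and id: "\<forall>z w. hs_eval r z w * hs_eval s z w = (\<Sum>f\<leftarrow>F. poly f z * cnj (poly f w))"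
  shows "norm (hs_eval r z w * hs_eval s z w)^2 \<le> (hs_diag r z * hs_diag s z) * (hs_diag r w * hs_diag s w)"
proof -
  have d: "hs_diag r x * hs_diag s x = (\<Sum>f\<leftarrow>F. norm (poly f x)^2)" for x
  proof -
    have "complex_of_real (hs_diag r x * hs_diag s x) = (\<Sum>f\<leftarrow>F. poly f x * cnj (poly f x))"
      using id eval_diag[OF h(1)] eval_diag[OF h(2)] by (metis of_real_mult)
    also have "\<dots> = complex_of_real (\<Sum>f\<leftarrow>F. norm (poly f x)^2)"
      by (induct F) (auto simp flip: of_real_power simp: complex_norm_square)
    finally show ?thesis using of_real_eq_iff by blast
  qed
  show ?thesis using CS_list[where F=F and z=z and w=w] id by (simp add: d)
qed

lemma coeff_rowpoly: "coeff (rowpoly c w) b = (\<Sum>(j,k)\<in>hs_support c. if j = b then c j k * cnj w ^ k else 0)"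
  unfolding rowpoly_def by (simp add: coeff_sum coeff_monom case_prod_beta)

theorem corollary4p4:
  fixes r :: "nat \<Rightarrow> nat \<Rightarrow> complex"
  assumes "hermitian_sym_poly r"
    and "\<forall>z. hs_diag r z > 0"
    and "(INF z. hs_diag r z) = 0"
  shows "\<not> Qprime1 r"
proof
  assume "Qprime1 r"
  then obtain s and F :: "complex poly list" where hs: "hermitian_sym_poly s" and sp: "\<forall>z. hs_diag s z \<ge> 0"
    and snz: "\<exists>j k. s j k \<noteq> 0"
    and id: "\<forall>z w. hs_eval r z w * hs_eval s z w = (\<Sum>f\<leftarrow>F. poly f z * cnj (poly f w))"
    unfolding Qprime1_def by blast
  define S where "S = hs_support s"
  have finS: "finite S" using hs unfolding hermitian_sym_poly_def S_def by blast
  have neS: "S \<noteq> {}" using snz unfolding S_def hs_support_def by auto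
  define b where "b = Max (fst ` S)"
  have bmax: "j \<le> b" if "s j k \<noteq> 0" for j k
  proof -
    have "(j,k) \<in> S" using that unfolding S_def hs_support_def by auto
    thus ?thesis unfolding b_def using finS by (metis Max_ge finite_imageI fst_conv image_eqI)
  qed
  obtain k0 where bk0: "(b, k0) \<in> S"
  proof -
    have "b \<in> fst ` S" unfolding b_def using finS neS by (intro Max_in) auto
    thus ?thesis using that by force
  qed
  have sbk0: "s b k0 \<noteq> 0" using bk0 unfolding S_def hs_support_def by auto
  define Qp where "Qp = (\<Sum>(j,k)\<in>S. if j = b then monom (s j k) k else 0)"
  have "coeff Qp k0 = (\<Sum>p\<in>S. if p = (b,k0) then s b k0 else 0)"
    unfolding Qp_def by (simp add: coeff_sum case_prod_beta coeff_monom) (intro sum.cong, auto)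
  also have "\<dots> = s b k0" using finS bk0 by simp
  finally have "Qp \<noteq> 0" using sbk0 by auto
  hence "finite {x. poly Qp x = 0}" by (rule poly_roots_finite)
  then obtain x where x: "poly Qp x \<noteq> 0"
    using infinite_UNIV_char_0 by (metis (mono_tags, lifting) UNIV_I mem_Collect_eq rev_finite_subset subsetI)
  define w0 where "w0 = cnj x"
  define Ps where "Ps = rowpoly s w0"
  define Pr where "Pr = rowpoly r w0"
  have "coeff Ps b = poly Qp x"
    unfolding Ps_def coeff_rowpoly Qp_def S_def w0_def
    by (simp add: poly_sum case_prod_beta if_distrib cong: if_cong) (intro sum.cong, auto simp: poly_monom)
  hence cb: "coeff Ps b \<noteq> 0" using x by simp
  hence Psnz: "Ps \<noteq> 0" by auto
  have degPs: "b \<le> degree Ps" using cb by (rule le_degree)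
  have "poly Pr w0 \<noteq> 0" unfolding Pr_def poly_rowpoly eval_diag[OF assms(1)] using assms(2)[rule_format, of w0] by simp
  hence Prnz: "Pr \<noteq> 0" by auto
  define P where "P = Pr * Ps"
  define n where "n = degree P"
  have Pnz: "P \<noteq> 0" using Prnz Psnz unfolding P_def by simp
  have bn: "b \<le> n" unfolding n_def P_def using degree_mult_eq[OF Prnz Psnz] degPs by simp
  define lc where "lc = lead_coeff P"
  have lcnz: "lc \<noteq> 0" using Pnz unfolding lc_def by simp
  have "((\<lambda>x. poly P x/x^n) \<longlongrightarrow> lc) at_infinity"
    unfolding n_def lc_def by (rule poly_divide_tendsto_aux)
  hence "\<forall>\<^sub>F x in at_infinity. dist (poly P x/x^n) lc < norm lc / 2"
    using lcnz by (intro tendstoD) auto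
  then obtain R0 where R0: "\<And>z. norm z \<ge> R0 \<Longrightarrow> dist (poly P z/z^n) lc < norm lc / 2"
    unfolding eventually_at_infinity by blast
  define R where "R = max R0 1"
  define c where "c = norm lc / 2"
  have cpos: "c > 0" using lcnz unfolding c_def by simp
  have lowP: "norm (poly P z) \<ge> c * norm z ^ b" if "norm z \<ge> R" for z
  proof -
    have z1: "norm z \<ge> 1" and zR0: "norm z \<ge> R0" using that unfolding R_def by auto
    have znz: "z \<noteq> 0" using z1 by auto
    have "norm lc - norm (poly P z/z^n) \<le> norm (poly P z/z^n - lc)" by (metis norm_minus_commute norm_triangle_ineq2)
    hence "norm (poly P z / z^n) \<ge> c" using R0[OF zR0] unfolding c_def dist_norm by simp
    hence "norm (poly P z) \<ge> c * norm z ^ n" using znz by (simp add: norm_divide norm_power field_simps)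
    moreover have "norm z ^ b \<le> norm z ^ n" using z1 bn by (rule power_increasing[rotated])
    ultimately show ?thesis using cpos by (meson mult_left_mono less_imp_le order_trans)
  qed
  define K where "K = hs_diag r w0 * hs_diag s w0"
  define C where "C = (\<Sum>(j,k)\<in>hs_support s. norm (s j k))"
  have key: "c^2 \<le> hs_diag r z * (C * K)" if "norm z \<ge> R" for z
  proof -
    have z1: "norm z \<ge> 1" using that unfolding R_def by auto
    define t where "t = norm z ^ b"
    have tpos: "t > 0" unfolding t_def using z1 by (intro zero_less_power) auto
    have "poly P z = hs_eval r z w0 * hs_eval s z w0"
      unfolding P_def Pr_def Ps_def by (simp add: poly_rowpoly)
    moreover have "(c * t)^2 \<le> norm (poly P z)^2"
      using lowP[OF that] cpos tpos unfolding t_def by (intro power_mono) auto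
    ultimately have "(c * t)^2 \<le> (hs_diag r z * hs_diag s z) * K"
      using prod_ineq[OF assms(1) hs id, of z w0] unfolding K_def by simp
    also have "\<dots> \<le> (hs_diag r z * (C * t^2)) * K"
    proof -
      have "hs_diag s z \<le> C * t^2" using diag_bound[OF hs bmax z1] unfolding C_def t_def
        by (simp add: power_mult mult.commute)
      moreover have "K \<ge> 0" unfolding K_def using assms(2) sp by (simp add: less_imp_le)
      ultimately show ?thesis using assms(2) by (intro mult_right_mono mult_left_mono) (auto simp: less_imp_le)
    qed
    finally have "c^2 * t^2 \<le> (hs_diag r z * (C * K)) * t^2" by (simp add: power_mult_distrib mult_ac)
    thus ?thesis using tpos by simp
  qed
  have CKpos: "C * K > 0"
  proof (rule ccontr)
    assume "\<not> C * K > 0"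
    moreover have "c^2 \<le> hs_diag r (of_real R) * (C * K)" using key[of "of_real R"] unfolding R_def by auto
    ultimately have "hs_diag r (of_real R) * (C * K) \<le> 0"
      using assms(2)[rule_format, of "of_real R"] by (metis mult_nonneg_nonpos less_imp_le not_less)
    moreover have "c^2 > 0" using cpos by simp
    ultimately show False using \<open>c^2 \<le> hs_diag r (of_real R) * (C * K)\<close> by linarith
  qed
  obtain zm where zm: "zm \<in> cball 0 R" "\<And>y. y \<in> cball 0 R \<Longrightarrow> hs_diag r zm \<le> hs_diag r y"
    using continuous_attains_inf[OF compact_cball _ cont_diag, of 0 R r] unfolding R_def by auto
  define \<epsilon> where "\<epsilon> = min (c^2 / (C*K)) (hs_diag r zm)"
  have epos: "\<epsilon> > 0" unfolding \<epsilon>_def using CKpos cpos assms(2) by auto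
  have "\<epsilon> \<le> hs_diag r z" for z
  proof (cases "norm z \<ge> R")
    case True
    have "c^2 / (C*K) \<le> hs_diag r z" using key[OF True] CKpos by (simp add: pos_divide_le_eq)
    then show ?thesis unfolding \<epsilon>_def by linarith
  next
    case False
    then show ?thesis using zm(2)[of z] unfolding \<epsilon>_def by auto
  qed
  hence "\<epsilon> \<le> (INF z. hs_diag r z)" by (intro cINF_greatest) auto
  thus False using epos assms(3) by simp
qed

end
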